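(* Let $d\in[0,1]$ and $\tau\in\mathbb N$ be such that $d\cdot\frac{\tau+1}{2^\tau}\le1/2$. Then the capacity of $\mathrm{BDC\text{-}Thr}(\tau,d)$ is at least $1-h\!\left(d\cdot\frac{\tau+1}{2^\tau}\right)$.
   Context: $\mathrm{BDC\text{-}Thr}(\tau,d)$ is the binary channel that acts on each maximal run of length $\ell$ of the input as follows: if $\ell<\tau$ the run is left unchanged; if $\ell\ge\tau$ each bit of the run is deleted independently with probability $d$. $h(p)=-p\log_2p-(1-p)\log_2(1-p)$ is the binary entropy function. Capacity means the supremum of achievable rates (rates of codes with decoding error probability tending to $0$ as the block length grows). *)

theory Defs
  imports "HOL-Probability.Probability"
begin

fun runs :: "bool list \<Rightarrow> (bool \<times> nat) list" where
  "runs [] = []"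
| "runs (x # xs) =
     (case runs xs of
        [] \<Rightarrow> [(x, 1)]
      | (b, l) # rs \<Rightarrow> (if b = x then (b, Suc l) # rs else (x, 1) # (b, l) # rs))"

text \<open>Action of the channel on a list of runs: a run of length l < tau is kept,
  otherwise each of its l bits survives independently with probability 1 - d,
  so the number of surviving bits is Binomial(l, 1 - d).\<close>
fun thr_runs :: "nat \<Rightarrow> real \<Rightarrow> (bool \<times> nat) list \<Rightarrow> bool list pmf" where
  "thr_runs \<tau> d [] = return_pmf []"
| "thr_runs \<tau> d ((b, l) # rs) =
     bind_pmf (if l < \<tau> then return_pmf l else binomial_pmf l (1 - d)) (\<lambda>k.
     bind_pmf (thr_runs \<tau> d rs) (\<lambda>ys.
     return_pmf (replicate k b @ ys)))"

definition bdc_thr :: "nat \<Rightarrow> real \<Rightarrow> bool list \<Rightarrow> bool list pmf" where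
  "bdc_thr \<tau> d x = thr_runs \<tau> d (runs x)"

text \<open>Binary entropy (with 0 log 0 = 0; in Isabelle ln 0 = 0).\<close>
definition bin_entropy :: "real \<Rightarrow> real" where
  "bin_entropy p = - p * log 2 p - (1 - p) * log 2 (1 - p)"

definition dec_error :: "(bool list \<Rightarrow> bool list pmf) \<Rightarrow> (nat \<Rightarrow> bool list) \<Rightarrow>
    (bool list \<Rightarrow> nat) \<Rightarrow> nat \<Rightarrow> real" where
  "dec_error W enc dec i = measure_pmf.prob (W (enc i)) {y. dec y \<noteq> i}"

definition achievable :: "(bool list \<Rightarrow> bool list pmf) \<Rightarrow> real \<Rightarrow> bool" where
  "achievable W R \<longleftrightarrow>
     (\<exists>(M :: nat \<Rightarrow> nat) (enc :: nat \<Rightarrow> nat \<Rightarrow> bool list) (dec :: nat \<Rightarrow> bool list \<Rightarrow> nat)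
        (\<epsilon> :: nat \<Rightarrow> real).
        (\<forall>n i. i < M n \<longrightarrow> length (enc n i) = n) \<and>
        (\<forall>n i. i < M n \<longrightarrow> dec_error W (enc n) (dec n) i \<le> \<epsilon> n) \<and>
        \<epsilon> \<longlonglongrightarrow> 0 \<and>
        (\<forall>\<^sub>F n in sequentially. 2 powr (R * real n) \<le> real (M n)))"

definition capacity :: "(bool list \<Rightarrow> bool list pmf) \<Rightarrow> ereal" where
  "capacity W = Sup (ereal ` {R. achievable W R})"

end

theory Submission
  imports Defs "HOL-Library.Sublist" "HOL-Real_Asymp.Real_Asymp"
begin


definition rw :: "(bool \<times> nat) list \<Rightarrow> bool list" where
  "rw rs = concat (map (\<lambda>(b,l). replicate l b) rs)"

lemma runs_nil_iff[simp]: "runs xs = [] \<longleftrightarrow> xs = []"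
  by (cases xs) (auto split: list.splits prod.splits)

lemma runs_hd: "xs \<noteq> [] \<Longrightarrow> fst (hd (runs xs)) = hd xs"
  by (induction xs) (auto split: list.splits prod.splits)

lemma rw_runs: "rw (runs xs) = xs"
proof (induction xs)
  case Nil then show ?case by (simp add: rw_def)
next
  case (Cons x xs)
  show ?case
  proof (cases "runs xs")
    case Nil then show ?thesis using Cons by (simp add: rw_def)
  next
    case (Cons r rs)
    obtain b l where r: "r = (b,l)" by force
    show ?thesis using Cons.IH Cons r by (auto simp: rw_def)
  qed
qed

lemma sum_runs: "sum_list (map snd (runs xs)) = length xs"
  by (induction xs) (auto split: list.splits prod.splits)

lemma subseq_thr:
  assumes "d \<in> {0..1}" "ys \<in> set_pmf (thr_runs \<tau> d rs)"
  shows "subseq ys (rw rs)"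
  using assms(2)
proof (induction rs arbitrary: ys)
  case Nil then show ?case by (simp add: rw_def)
next
  case (Cons r rs)
  obtain b l where r: "r = (b,l)" by force
  from Cons.prems obtain k zs where k: "k \<in> set_pmf (if l < \<tau> then return_pmf l else binomial_pmf l (1 - d))"
     and zs: "zs \<in> set_pmf (thr_runs \<tau> d rs)" and ys: "ys = replicate k b @ zs"
    by (auto simp: r)
  have "k \<le> l"
  proof (cases "l < \<tau>")
    case True then show ?thesis using k by simp
  next
    case False
    then have "k \<in> set_pmf (binomial_pmf l (1 - d))" using k by simp
    moreover have "set_pmf (binomial_pmf l (1-d)) \<subseteq> {..l}"
      using assms(1) by (subst set_pmf_binomial_eq) auto
    ultimately show ?thesis by auto
  qed
  then have rl: "replicate l b = replicate k b @ replicate (l-k) b"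
    by (metis le_add_diff_inverse replicate_add)
  have "subseq (replicate k b @ []) (replicate k b @ replicate (l-k) b)"
    unfolding subseq_append' by simp
  then have "subseq (replicate k b) (replicate l b)" using rl by simp
  moreover have "rw (r # rs) = replicate l b @ rw rs" by (simp add: rw_def r)
  ultimately show ?case using Cons.IH[OF zs] ys
    by (simp add: list_emb_append_mono)
qed

lemma subseq_bdc: "d \<in> {0..1} \<Longrightarrow> ys \<in> set_pmf (bdc_thr \<tau> d x) \<Longrightarrow> subseq ys x"
  using subseq_thr[of d ys \<tau> "runs x"] by (simp add: bdc_thr_def rw_runs)



definition Lr :: "nat \<Rightarrow> (bool \<times> nat) list \<Rightarrow> nat" where
  "Lr \<tau> rs = sum_list (map (\<lambda>(b,l). if \<tau> \<le> l then l else 0) rs)"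
definition Sr :: "nat \<Rightarrow> (bool \<times> nat) list \<Rightarrow> nat" where
  "Sr \<tau> rs = sum_list (map (\<lambda>(b,l). if \<tau> \<le> l then 0 else l) rs)"

lemma Lr_Sr: "Lr \<tau> rs + Sr \<tau> rs = sum_list (map snd rs)"
  by (induction rs) (auto simp: Lr_def Sr_def)

lemma binom_add:
  assumes p: "p \<in> {0..1}"
  shows "binomial_pmf (a + b) p = bind_pmf (binomial_pmf a p) (\<lambda>i. map_pmf (\<lambda>j. i + j) (binomial_pmf b p))"
proof (induction a)
  case 0
  then show ?case using p by (simp add: binomial_pmf_0 bind_return_pmf map_pmf_def bind_return_pmf')
next
  case (Suc a)
  have "binomial_pmf (Suc a + b) p = binomial_pmf (Suc (a + b)) p" by simp
  also have "\<dots> = bind_pmf (bernoulli_pmf p) (\<lambda>x. bind_pmf (binomial_pmf (a+b) p) (\<lambda>k. return_pmf ((if x then 1 else 0) + k)))"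
    using p by (simp only: binomial_pmf_Suc)
  also have "\<dots> = bind_pmf (binomial_pmf (Suc a) p) (\<lambda>i. map_pmf (\<lambda>j. i + j) (binomial_pmf b p))"
    using p unfolding Suc binomial_pmf_Suc[OF p, of a]
    by (simp add: bind_assoc_pmf bind_return_pmf map_pmf_def add.assoc)
  finally show ?case .
qed

lemma len_thr:
  assumes d: "d \<in> {0..1}"
  shows "map_pmf length (thr_runs \<tau> d rs) = map_pmf (\<lambda>k. k + Sr \<tau> rs) (binomial_pmf (Lr \<tau> rs) (1-d))"
proof (induction rs)
  case Nil
  then show ?case using d by (simp add: Lr_def Sr_def binomial_pmf_0)
next
  case (Cons r rs)
  obtain b l where r: "r = (b,l)" by force
  have p: "1 - d \<in> {0..1}" using d by auto
  have "map_pmf length (thr_runs \<tau> d (r # rs)) =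
     bind_pmf (if l < \<tau> then return_pmf l else binomial_pmf l (1 - d))
       (\<lambda>k. map_pmf (\<lambda>ys. k + length ys) (thr_runs \<tau> d rs))"
    by (simp add: r map_bind_pmf map_pmf_def bind_assoc_pmf bind_return_pmf)
  also have "\<dots> = bind_pmf (if l < \<tau> then return_pmf l else binomial_pmf l (1 - d))
       (\<lambda>k. map_pmf (\<lambda>j. k + j) (map_pmf length (thr_runs \<tau> d rs)))"
    by (simp add: pmf.map_comp o_def)
  also have "\<dots> = map_pmf (\<lambda>k. k + Sr \<tau> (r # rs)) (binomial_pmf (Lr \<tau> (r # rs)) (1-d))"
  proof (cases "l < \<tau>")
    case True
    then show ?thesis
      by (simp add: Cons.IH r Lr_def Sr_def bind_return_pmf pmf.map_comp o_def add_ac)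
  next
    case False
    have e: "Lr \<tau> (r # rs) = l + Lr \<tau> rs" "Sr \<tau> (r # rs) = Sr \<tau> rs" using False by (auto simp: r Lr_def Sr_def)
    have "bind_pmf (if l < \<tau> then return_pmf l else binomial_pmf l (1 - d))
       (\<lambda>k. map_pmf (\<lambda>j. k + j) (map_pmf length (thr_runs \<tau> d rs)))
      = bind_pmf (binomial_pmf l (1 - d))
       (\<lambda>k. map_pmf (\<lambda>j. k + j + Sr \<tau> rs) (binomial_pmf (Lr \<tau> rs) (1-d)))"
      using False unfolding Cons.IH by (simp add: pmf.map_comp o_def add.assoc)
    also have "\<dots> = map_pmf (\<lambda>k. k + Sr \<tau> rs) (bind_pmf (binomial_pmf l (1 - d))
       (\<lambda>k. map_pmf (\<lambda>j. k + j) (binomial_pmf (Lr \<tau> rs) (1-d))))"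
      by (simp add: map_bind_pmf pmf.map_comp o_def)
    also have "\<dots> = map_pmf (\<lambda>k. k + Sr \<tau> (r # rs)) (binomial_pmf (Lr \<tau> (r # rs)) (1-d))"
      unfolding e binom_add[OF p] ..
    finally show ?thesis .
  qed
  finally show ?case .
qed

lemma tail_thr:
  fixes d \<gamma> \<delta> :: real
  assumes d: "d \<in> {0..1}" and g: "\<gamma> > 0" and n: "sum_list (map snd rs) = n"
    and le: "d * Lr \<tau> rs + \<gamma> * n \<le> \<delta> * n"
  shows "measure_pmf.prob (thr_runs \<tau> d rs) {y. real (length y) + \<delta> * n < n} \<le> exp (-2 * \<gamma>^2 * n)"
proof -
  define L where "L = Lr \<tau> rs"
  define S where "S = Sr \<tau> rs"
  have LS: "L + S = n" using Lr_Sr[of \<tau> rs] n by (simp add: L_def S_def)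
  have "measure_pmf.prob (thr_runs \<tau> d rs) {y. real (length y) + \<delta> * n < n}
      = measure_pmf.prob (map_pmf length (thr_runs \<tau> d rs)) {k. real k + \<delta> * n < n}"
    by (simp add: measure_map_pmf vimage_def)
  also have "\<dots> = measure_pmf.prob (binomial_pmf L (1-d)) {k. real (k + S) + \<delta> * n < n}"
    by (simp add: len_thr[OF d] measure_map_pmf vimage_def L_def S_def)
  also have "\<dots> \<le> exp (-2 * \<gamma>^2 * n)"
  proof (cases "L = 0")
    case True
    have "d * L + \<gamma> * n \<le> \<delta> * n" using le by (simp add: L_def)
    moreover have "0 \<le> \<gamma> * n" using g by simp
    ultimately have dn: "0 \<le> \<delta> * n" using True by simp
    have B: "binomial_pmf L (1-d) = return_pmf 0" using True d by (simp add: binomial_pmf_0)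
    have "0 \<notin> {k. real (k + S) + \<delta> * n < n}" using LS True dn by simp
    then have "measure_pmf.prob (binomial_pmf L (1-d)) {k. real (k + S) + \<delta> * n < n} = 0"
      unfolding B by (simp add: measure_return)
    then show ?thesis by simp
  next
    case False
    interpret binomial_distribution L "1-d" using d by unfold_locales auto
    define \<epsilon> where "\<epsilon> = \<delta> * n - d * L"
    have eps: "\<epsilon> \<ge> \<gamma> * n" using le by (simp add: \<epsilon>_def L_def)
    have "{k. real (k + S) + \<delta> * n < n} \<subseteq> {x. real x \<le> real L * (1-d) - \<epsilon>}"
      using LS by (auto simp: \<epsilon>_def algebra_simps)
    then have "measure_pmf.prob (binomial_pmf L (1-d)) {k. real (k + S) + \<delta> * n < n}
        \<le> measure_pmf.prob (binomial_pmf L (1-d)) {x. real x \<le> real L * (1-d) - \<epsilon>}"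
      by (rule measure_pmf.finite_measure_mono) auto
    also have "\<dots> \<le> exp (-2 * \<epsilon>^2 / L)"
    proof -
      have "0 \<le> \<gamma> * n" using g by simp
      then have "\<epsilon> \<ge> 0" using eps by linarith
      then show ?thesis using prob_le[of \<epsilon>] False by simp
    qed
    also have "\<dots> \<le> exp (-2 * \<gamma>^2 * n)"
    proof -
      have Ln: "real L \<le> n" using LS by simp
      have Lp: "real L > 0" using False by simp
      have "(\<gamma> * n)^2 \<le> \<epsilon>^2" using eps g by (intro power_mono) auto
      then have "\<gamma>^2 * n * n \<le> \<epsilon>^2" by (simp add: power2_eq_square algebra_simps)
      moreover have "\<gamma>^2 * n * L \<le> \<gamma>^2 * n * n" using Ln by (intro mult_left_mono) auto
      ultimately have "\<gamma>^2 * n * L \<le> \<epsilon>^2" by linarith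
      then have "\<gamma>^2 * n \<le> \<epsilon>^2 / L" using Lp by (simp add: field_simps)
      then show ?thesis by simp
    qed
    finally show ?thesis .
  qed
  finally show ?thesis .
qed



definition words :: "nat \<Rightarrow> bool list set" where
  "words n = {x. length x = n}"

lemma words_finite[simp]: "finite (words n)"
  using finite_lists_length_eq[of "UNIV :: bool set" n] by (simp add: words_def)

lemma words_card: "card (words n) = 2 ^ n"
  using card_lists_length_eq[of "UNIV :: bool set" n] by (simp add: words_def)

lemma words_Suc: "words (Suc n) = Cons True ` words n \<union> Cons False ` words n"
proof
  show "words (Suc n) \<subseteq> Cons True ` words n \<union> Cons False ` words n"
  proof
    fix x assume "x \<in> words (Suc n)"
    then obtain c x' where "x = c # x'" "length x' = n" by (auto simp: words_def length_Suc_conv)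
    then show "x \<in> Cons True ` words n \<union> Cons False ` words n" by (cases c) (auto simp: words_def)
  qed
qed (auto simp: words_def)

fun gcnt :: "nat \<Rightarrow> nat \<Rightarrow> nat" where
  "gcnt 0 0 = 1"
| "gcnt 0 (Suc m) = 0"
| "gcnt (Suc n) 0 = 2 ^ Suc n"
| "gcnt (Suc n) (Suc m) = gcnt n m + gcnt n (Suc m)"

lemma card_super: "card {x \<in> words n. subseq y x} = gcnt n (length y)"
proof (induction n arbitrary: y)
  case 0
  then show ?case by (cases y) (auto simp: words_def)
next
  case (Suc n)
  show ?case
  proof (cases y)
    case Nil
    then show ?thesis using words_card[of "Suc n"] by simp
  next
    case (Cons a y')
    have eq: "{x \<in> words (Suc n). subseq y x} =
      Cons a ` {x \<in> words n. subseq y' x} \<union> Cons (\<not> a) ` {x \<in> words n. subseq y x}"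
    proof
      show "{x \<in> words (Suc n). subseq y x} \<subseteq> Cons a ` {x \<in> words n. subseq y' x} \<union> Cons (\<not> a) ` {x \<in> words n. subseq y x}"
      proof
        fix x assume x: "x \<in> {x \<in> words (Suc n). subseq y x}"
        then obtain c x' where xc: "x = c # x'" "length x' = n" by (auto simp: words_def length_Suc_conv)
        show "x \<in> Cons a ` {x \<in> words n. subseq y' x} \<union> Cons (\<not> a) ` {x \<in> words n. subseq y x}"
        proof (cases "c = a")
          case True then show ?thesis using x xc Cons by (auto simp: words_def)
        next
          case False then have "c = (\<not> a)" by auto
          then show ?thesis using x xc Cons False by (auto simp: words_def)
        qed
      qed
    qed (auto simp: words_def Cons)
    have "card {x \<in> words (Suc n). subseq y x} = card (Cons a ` {x \<in> words n. subseq y' x}) + card (Cons (\<not> a) ` {x \<in> words n. subseq y x})"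
      unfolding eq by (rule card_Un_disjoint) auto
    also have "\<dots> = card {x \<in> words n. subseq y' x} + card {x \<in> words n. subseq y x}"
      by (simp add: card_image)
    also have "\<dots> = gcnt (Suc n) (length y)" using Suc.IH Cons by simp
    finally show ?thesis .
  qed
qed

lemma pascal_sum: "(\<Sum>j\<le>Suc k. Suc n choose j) = (\<Sum>j\<le>Suc k. n choose j) + (\<Sum>j\<le>k. n choose j)"
proof (induction k)
  case 0
  then show ?case by simp
next
  case (Suc k)
  have "(\<Sum>j\<le>Suc (Suc k). Suc n choose j) = (\<Sum>j\<le>Suc k. Suc n choose j) + (Suc n choose Suc (Suc k))" by simp
  also have "\<dots> = (\<Sum>j\<le>Suc k. n choose j) + (\<Sum>j\<le>k. n choose j) + ((n choose Suc k) + (n choose Suc (Suc k)))"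
    using Suc.IH by simp
  also have "\<dots> = (\<Sum>j\<le>Suc (Suc k). n choose j) + (\<Sum>j\<le>Suc k. n choose j)" by simp
  finally show ?case .
qed

lemma gcnt_closed: "gcnt n m = (if m \<le> n then (\<Sum>j\<le>n - m. n choose j) else 0)"
proof (induction n arbitrary: m)
  case 0
  then show ?case by (cases m) auto
next
  case (Suc n)
  show ?case
  proof (cases m)
    case 0
    then show ?thesis by (simp only: gcnt.simps choose_row_sum diff_zero) simp
  next
    case (Suc m')
    show ?thesis
    proof (cases "m' < n")
      case True
      then obtain k where k: "n - m' = Suc k" by (metis Suc_diff_Suc)
      then have k2: "n - Suc m' = k" by simp
      show ?thesis using True Suc Suc.IH[of m'] Suc.IH[of "Suc m'"] k k2 pascal_sum[where k=k and n=n]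
        by (simp del: sum.atMost_Suc)
    next
      case False
      then show ?thesis using Suc Suc.IH[of m'] Suc.IH[of "Suc m'"] by auto
    qed
  qed
qed

lemma sum_choose_entropy:
  fixes \<delta> :: real
  assumes d0: "0 < \<delta>" and d1: "\<delta> \<le> 1/2" and k: "real k \<le> \<delta> * n"
  shows "real (\<Sum>j\<le>k. n choose j) \<le> 2 powr (n * bin_entropy \<delta>)"
proof -
  define a where "a = \<delta>"
  define b where "b = 1 - \<delta>"
  have a0: "a > 0" and b0: "b > 0" and ab: "a \<le> b" using d0 d1 by (auto simp: a_def b_def)
  have "\<delta> * real n \<le> 1 * real n" using d1 by (intro mult_right_mono) auto
  then have "real k \<le> real n" using k by linarith
  then have kn: "k \<le> n" by simp
  have key: "2 powr (- (n * bin_entropy \<delta>)) = a powr (\<delta> * n) * b powr ((1-\<delta>) * n)"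
  proof -
    have "- (n * bin_entropy \<delta>) = (\<delta> * n) * log 2 a + ((1-\<delta>) * n) * log 2 b"
      by (simp add: bin_entropy_def a_def b_def algebra_simps)
    then have "2 powr (- (n * bin_entropy \<delta>)) = 2 powr ((\<delta> * n) * log 2 a) * 2 powr (((1-\<delta>) * n) * log 2 b)"
      by (simp add: powr_add)
    also have "\<dots> = a powr (\<delta> * n) * b powr ((1-\<delta>) * n)"
    proof -
      have h2: "2 powr (X * log 2 c) = c powr X" if "c > 0" for X c :: real
      proof -
        have "2 powr (X * log 2 c) = (2 powr log 2 c) powr X" by (simp add: powr_powr mult.commute)
        also have "\<dots> = c powr X" using that by simp
        finally show ?thesis .
      qed
      show ?thesis using h2[OF a0] h2[OF b0] by simp
    qed
    finally show ?thesis .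
  qed
  have tm: "2 powr (- (n * bin_entropy \<delta>)) \<le> a ^ j * b ^ (n - j)" if j: "j \<le> k" for j
  proof -
    have jn: "j \<le> n" using j kn by simp
    have r: "0 < a / b" "a / b \<le> 1" using a0 b0 ab by auto
    have "(a/b) powr (\<delta> * n) \<le> (a/b) powr (real j)"
      using r j k by (intro powr_mono') auto
    then have "b powr n * (a/b) powr (\<delta> * n) \<le> b powr n * (a/b) powr (real j)"
      using b0 by (intro mult_left_mono) auto
    moreover have "b powr n * (a/b) powr (\<delta> * n) = a powr (\<delta> * n) * b powr ((1-\<delta>) * n)"
      using a0 b0 by (simp add: powr_divide powr_diff left_diff_distrib powr_add field_simps)
    moreover have "b powr n * (a/b) powr (real j) = a ^ j * b ^ (n - j)"
      using a0 b0 jn by (simp add: powr_divide powr_realpow power_diff field_simps)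
    ultimately show ?thesis using key by simp
  qed
  have "(\<Sum>j\<le>k. real (n choose j) * 2 powr (- (n * bin_entropy \<delta>))) \<le> (\<Sum>j\<le>k. real (n choose j) * (a ^ j * b ^ (n - j)))"
    using tm by (intro sum_mono mult_left_mono) auto
  also have "\<dots> \<le> (\<Sum>j\<le>n. real (n choose j) * (a ^ j * b ^ (n - j)))"
    using kn a0 b0 by (intro sum_mono2) auto
  also have "\<dots> = (a + b) ^ n" by (simp add: binomial_ring mult.assoc)
  also have "\<dots> = 1" by (simp add: a_def b_def)
  finally have "real (\<Sum>j\<le>k. n choose j) * 2 powr (- (n * bin_entropy \<delta>)) \<le> 1"
    by (simp add: sum_distrib_right)
  then show ?thesis by (simp add: powr_minus field_simps)
qed



definition fl :: "nat \<Rightarrow> nat \<Rightarrow> nat" where "fl \<tau> l = (if \<tau> \<le> l then l else 0)"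
definition Lfun :: "nat \<Rightarrow> bool list \<Rightarrow> nat" where "Lfun \<tau> x = Lr \<tau> (runs x)"
definition fr :: "bool list \<Rightarrow> nat" where "fr x = (case runs x of [] \<Rightarrow> 0 | (b,l) # _ \<Rightarrow> l)"
definition psi :: "nat \<Rightarrow> nat \<Rightarrow> real" where
  "psi \<tau> r = (if \<tau> \<le> r then real r + 1 else (real \<tau> + 1) * 2 ^ r / 2 ^ \<tau>)"
definition qq :: "nat \<Rightarrow> real" where "qq \<tau> = (real \<tau> + 1) / 2 ^ \<tau>"
definition Hf :: "nat \<Rightarrow> bool list \<Rightarrow> real" where
  "Hf \<tau> x = real (Lfun \<tau> x) - real (fl \<tau> (fr x)) + psi \<tau> (fr x)"

lemma psi_rec: "psi \<tau> (Suc l) + real (fl \<tau> l) = 2 * psi \<tau> l"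
proof (cases "\<tau> \<le> l")
  case True then show ?thesis by (simp add: psi_def fl_def)
next
  case False
  show ?thesis
  proof (cases "Suc l = \<tau>")
    case True
    then show ?thesis by (auto simp: psi_def fl_def field_simps)
  next
    case False
    with \<open>\<not> \<tau> \<le> l\<close> show ?thesis by (auto simp: psi_def fl_def field_simps)
  qed
qed

lemma psi_1: "psi \<tau> 1 = 2 * qq \<tau>"
proof (cases "\<tau> \<le> 1")
  case True
  then have "\<tau> = 0 \<or> \<tau> = 1" by auto
  then show ?thesis by (auto simp: psi_def qq_def)
next
  case False then show ?thesis by (simp add: psi_def qq_def)
qed

lemma psi_0: "psi \<tau> 0 = qq \<tau>"
  by (cases "\<tau> = 0") (auto simp: psi_def qq_def)

lemma Lr_Cons[simp]: "Lr \<tau> ((b,l) # rs) = fl \<tau> l + Lr \<tau> rs"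
  by (simp add: Lr_def fl_def)

lemma Hf_step: "Hf \<tau> (True # x) + Hf \<tau> (False # x) = 2 * Hf \<tau> x + 2 * qq \<tau>"
proof (cases "runs x")
  case Nil
  then have "x = []" by simp
  then show ?thesis using psi_1[of \<tau>] psi_0[of \<tau>]
    by (simp add: Hf_def Lfun_def fr_def Lr_def fl_def)
next
  case (Cons r rs)
  obtain b l where r: "r = (b,l)" by force
  have hx: "x \<noteq> []" using Cons by auto
  have hb: "hd x = b" using runs_hd[OF hx] Cons r by simp
  obtain x' where x: "x = b # x'" using hx hb by (cases x) auto
  have same: "runs (b # x) = (b, Suc l) # rs" using Cons r by simp
  have diff: "runs ((\<not> b) # x) = (\<not> b, 1) # (b, l) # rs" using Cons r by simp
  have "Hf \<tau> (b # x) = real (Lr \<tau> rs) + psi \<tau> (Suc l)"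
    using same by (simp add: Hf_def Lfun_def fr_def)
  moreover have "Hf \<tau> ((\<not> b) # x) = real (fl \<tau> 1) + real (fl \<tau> l) + real (Lr \<tau> rs) - real (fl \<tau> 1) + psi \<tau> 1"
    using diff by (simp add: Hf_def Lfun_def fr_def)
  moreover have "Hf \<tau> x = real (Lr \<tau> rs) + psi \<tau> l"
    using Cons r by (simp add: Hf_def Lfun_def fr_def)
  ultimately have "Hf \<tau> (b # x) + Hf \<tau> ((\<not> b) # x) = 2 * Hf \<tau> x + 2 * qq \<tau>"
    using psi_rec[of \<tau> l] psi_1[of \<tau>] by simp
  then show ?thesis by (cases b) auto
qed

lemma sum_Hf: "(\<Sum>x\<in>words n. Hf \<tau> x) = (real n + 1) * qq \<tau> * 2 ^ n"
proof (induction n)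
  case 0
  have "words 0 = {[]}" by (auto simp: words_def)
  then show ?case using psi_0[of \<tau>] by (simp add: Hf_def Lfun_def fr_def Lr_def fl_def)
next
  case (Suc n)
  have "(\<Sum>x\<in>words (Suc n). Hf \<tau> x) = (\<Sum>x\<in>Cons True ` words n. Hf \<tau> x) + (\<Sum>x\<in>Cons False ` words n. Hf \<tau> x)"
    unfolding words_Suc by (rule sum.union_disjoint) auto
  also have "\<dots> = (\<Sum>x\<in>words n. Hf \<tau> (True # x)) + (\<Sum>x\<in>words n. Hf \<tau> (False # x))"
    by (simp add: sum.reindex)
  also have "\<dots> = (\<Sum>x\<in>words n. 2 * Hf \<tau> x + 2 * qq \<tau>)"
    by (simp add: sum.distrib[symmetric] Hf_step)
  also have "\<dots> = 2 * (real n + 1) * qq \<tau> * 2 ^ n + 2 * qq \<tau> * 2 ^ n"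
    by (simp add: sum.distrib sum_distrib_left[symmetric] Suc.IH words_card)
  also have "\<dots> = (real (Suc n) + 1) * qq \<tau> * 2 ^ Suc n" by (simp add: algebra_simps)
  finally show ?case .
qed

lemma Lfun_le_Hf: "real (Lfun \<tau> x) \<le> Hf \<tau> x"
proof -
  have "real (fl \<tau> r) \<le> psi \<tau> r" for r
    by (auto simp: fl_def psi_def)
  then show ?thesis by (simp add: Hf_def)
qed

lemma sum_Lfun: "(\<Sum>x\<in>words n. real (Lfun \<tau> x)) \<le> (real n + 1) * qq \<tau> * 2 ^ n"
  using sum_mono[of "words n" "\<lambda>x. real (Lfun \<tau> x)" "Hf \<tau>"] Lfun_le_Hf sum_Hf by simp

lemma Lfun_le_length: "Lfun \<tau> x \<le> length x"
  using Lr_Sr[of \<tau> "runs x"] sum_runs[of x] by (simp add: Lfun_def)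

lemma card_T:
  fixes lam :: real
  assumes "lam > 0" "n > 0"
  shows "real (card {x\<in>words n. Lfun \<tau> x \<le> lam * n}) \<ge> 2 ^ n - (real n + 1) * qq \<tau> * 2 ^ n / (lam * n)"
proof -
  define T where "T = {x\<in>words n. Lfun \<tau> x \<le> lam * n}"
  define B where "B = {x\<in>words n. \<not> Lfun \<tau> x \<le> lam * n}"
  have ln: "lam * n > 0" using assms by simp
  have "card B * (lam * n) = (\<Sum>x\<in>B. lam * n)" by simp
  also have "\<dots> \<le> (\<Sum>x\<in>B. real (Lfun \<tau> x))" by (intro sum_mono) (auto simp: B_def)
  also have "\<dots> \<le> (\<Sum>x\<in>words n. real (Lfun \<tau> x))" by (intro sum_mono2) (auto simp: B_def)
  also have "\<dots> \<le> (real n + 1) * qq \<tau> * 2 ^ n" by (rule sum_Lfun)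
  finally have cb: "card B \<le> (real n + 1) * qq \<tau> * 2 ^ n / (lam * n)" using ln by (simp add: field_simps)
  have "card T + card B = card (words n)"
    unfolding T_def B_def by (subst card_Un_disjoint[symmetric]) (auto intro: arg_cong[where f=card])
  then have "real (card T + card B) = 2 ^ n" using words_card[of n] by simp
  then have "real (card T) = 2 ^ n - real (card B)" by simp
  then show ?thesis using cb unfolding T_def by linarith
qed



lemma exists_le_avg:
  fixes f :: "'a \<Rightarrow> real"
  assumes "finite A" "A \<noteq> {}"
  shows "\<exists>b\<in>A. f b \<le> (\<Sum>x\<in>A. f x) / card A"
proof (rule ccontr)
  assume "\<not> ?thesis"
  then have "\<forall>b\<in>A. (\<Sum>x\<in>A. f x) / card A < f b" by auto
  then have "(\<Sum>b\<in>A. (\<Sum>x\<in>A. f x) / card A) < (\<Sum>b\<in>A. f b)"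
    using assms by (intro sum_strict_mono) auto
  then show False using assms by simp
qed

lemma pair_sum_insert:
  fixes u :: "'a \<Rightarrow> 'a \<Rightarrow> real"
  assumes "finite C" "b \<notin> C"
  shows "(\<Sum>a\<in>insert b C. \<Sum>c\<in>insert b C - {a}. u a c) =
         (\<Sum>a\<in>C. \<Sum>c\<in>C - {a}. u a c) + (\<Sum>a\<in>C. u a b + u b a)"
proof -
  have "(\<Sum>a\<in>insert b C. \<Sum>c\<in>insert b C - {a}. u a c) =
        (\<Sum>c\<in>insert b C - {b}. u b c) + (\<Sum>a\<in>C. \<Sum>c\<in>insert b C - {a}. u a c)"
    using assms by simp
  also have "(\<Sum>c\<in>insert b C - {b}. u b c) = (\<Sum>c\<in>C. u b c)"
    using assms by (metis Diff_insert_absorb)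
  also have "(\<Sum>a\<in>C. \<Sum>c\<in>insert b C - {a}. u a c) = (\<Sum>a\<in>C. u a b + (\<Sum>c\<in>C - {a}. u a c))"
  proof (intro sum.cong refl)
    fix a assume a: "a \<in> C"
    have "insert b C - {a} = insert b (C - {a})" using a assms by auto
    then show "(\<Sum>c\<in>insert b C - {a}. u a c) = u a b + (\<Sum>c\<in>C - {a}. u a c)"
      using assms by simp
  qed
  finally show ?thesis by (simp add: sum.distrib)
qed

lemma greedy:
  fixes u :: "'a \<Rightarrow> 'a \<Rightarrow> real" and \<Delta> :: real
  assumes V: "finite V" and u0: "\<And>a b. 0 \<le> u a b"
    and row: "\<And>a. a \<in> V \<Longrightarrow> (\<Sum>b\<in>V. u a b) \<le> \<Delta>"
    and col: "\<And>b. b \<in> V \<Longrightarrow> (\<Sum>a\<in>V. u a b) \<le> \<Delta>"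
  shows "2 * k \<le> card V \<Longrightarrow> \<exists>C\<subseteq>V. card C = k \<and> (\<Sum>a\<in>C. \<Sum>b\<in>C - {a}. u a b) \<le> 4 * k^2 * \<Delta> / card V"
proof (induction k)
  case 0
  then show ?case by (intro exI[of _ "{}"]) auto
next
  case (Suc k)
  define N where "N = card V"
  have Nk: "2 * Suc k \<le> N" using Suc.prems by (simp add: N_def)
  then obtain C where C: "C \<subseteq> V" "card C = k" and old: "(\<Sum>a\<in>C. \<Sum>b\<in>C - {a}. u a b) \<le> 4 * (real k)^2 * \<Delta> / N"
    using Suc.IH by (auto simp: N_def)
  have Cfin: "finite C" using C V finite_subset by auto
  have Vne: "V \<noteq> {}" using Nk N_def by auto
  then obtain v where v: "v \<in> V" by auto
  have D0: "0 \<le> \<Delta>" using row[OF v] sum_nonneg[of V "u v"] u0 by force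
  define f where "f b = (\<Sum>a\<in>C. u a b + u b a)" for b
  have cardVC: "card (V - C) = N - k" using C Cfin by (simp add: card_Diff_subset N_def)
  have "card (V - C) > 0" using cardVC Nk by simp
  then have VCne: "V - C \<noteq> {}" by (metis card.empty less_irrefl)
  have f0: "0 \<le> f b" for b unfolding f_def using u0 by (intro sum_nonneg) (simp add: add_nonneg_nonneg)
  have "(\<Sum>b\<in>V - C. f b) \<le> (\<Sum>b\<in>V. f b)"
    using V f0 by (intro sum_mono2) auto
  also have "\<dots> = (\<Sum>a\<in>C. (\<Sum>b\<in>V. u a b) + (\<Sum>b\<in>V. u b a))"
    unfolding f_def by (subst sum.swap) (simp only: sum.distrib)
  also have "\<dots> \<le> (\<Sum>a\<in>C. \<Delta> + \<Delta>)"
    using C row col by (intro sum_mono add_mono) auto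
  also have "\<dots> = 2 * k * \<Delta>" using C by simp
  finally have sumf: "(\<Sum>b\<in>V - C. f b) \<le> 2 * k * \<Delta>" .
  obtain b where b: "b \<in> V - C" and fb: "f b \<le> (\<Sum>x\<in>V - C. f x) / card (V - C)"
    using exists_le_avg[of "V - C" f] V VCne by auto
  have NK: "real N \<le> 2 * real (N - k)" using Nk by simp
  have Npos: "real (N - k) > 0" using Nk by simp
  have "(\<Sum>x\<in>V - C. f x) / card (V - C) \<le> 2 * k * \<Delta> / card (V - C)"
    using sumf by (intro divide_right_mono) auto
  then have "f b \<le> 2 * k * \<Delta> / (N - k)"
    using fb cardVC by simp
  also have "\<dots> \<le> 4 * k * \<Delta> / N"
  proof -
    have "2 * k * \<Delta> * N \<le> 4 * k * \<Delta> * (N - k)"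
    proof -
      have "0 \<le> 2 * k * \<Delta>" using D0 by simp
      then have "2 * k * \<Delta> * N \<le> 2 * k * \<Delta> * (2 * (N - k))" using NK by (intro mult_left_mono) auto
      then show ?thesis by simp
    qed
    then show ?thesis using Npos Nk by (simp add: field_simps)
  qed
  finally have fb2: "f b \<le> 4 * k * \<Delta> / N" .
  define C' where "C' = insert b C"
  have c1: "card C' = Suc k" using b C Cfin by (simp add: C'_def)
  have c2: "C' \<subseteq> V" using b C by (auto simp: C'_def)
  have c3: "(\<Sum>a\<in>C'. \<Sum>c\<in>C' - {a}. u a c) \<le> 4 * (real (Suc k))^2 * \<Delta> / N"
  proof -
    have "(\<Sum>a\<in>C'. \<Sum>c\<in>C' - {a}. u a c) = (\<Sum>a\<in>C. \<Sum>c\<in>C - {a}. u a c) + f b"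
      unfolding C'_def f_def using pair_sum_insert[of C b u] Cfin b by blast
    also have "\<dots> \<le> 4 * (real k)^2 * \<Delta> / N + 4 * k * \<Delta> / N" using old fb2 by simp
    also have "\<dots> \<le> 4 * (real (Suc k))^2 * \<Delta> / N"
    proof -
      have "(real k)^2 + real k \<le> (real (Suc k))^2" by (simp add: power2_eq_square algebra_simps)
      then have "((real k)^2 + real k) * (4 * \<Delta>) \<le> (real (Suc k))^2 * (4 * \<Delta>)"
        using D0 by (intro mult_right_mono) auto
      then have "4 * (real k)^2 * \<Delta> + 4 * k * \<Delta> \<le> 4 * (real (Suc k))^2 * \<Delta>"
        by (simp add: algebra_simps)
      then have "(4 * (real k)^2 * \<Delta> + 4 * k * \<Delta>) / N \<le> 4 * (real (Suc k))^2 * \<Delta> / N"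
        by (intro divide_right_mono) auto
      then show ?thesis by (simp add: add_divide_distrib)
    qed
    finally show ?thesis .
  qed
  show ?case apply (rule exI[of _ C']) using c1 c2 c3 unfolding N_def by blast
qed

lemma expurgate:
  fixes g :: "'a \<Rightarrow> real"
  assumes C: "finite C" "C \<noteq> {}" and g0: "\<And>a. a \<in> C \<Longrightarrow> 0 \<le> g a" and B: "(\<Sum>a\<in>C. g a) \<le> B"
  shows "card C \<le> 2 * card {a\<in>C. g a \<le> 2 * B / card C}"
proof -
  define D where "D = {a\<in>C. \<not> g a \<le> 2 * B / card C}"
  define K where "K = {a\<in>C. g a \<le> 2 * B / card C}"
  have B0: "0 \<le> B" using B sum_nonneg[of C g] g0 by force
  have cC: "real (card C) > 0" using C by (simp add: card_gt_0_iff)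
  have "card D * (2 * B / card C) \<le> (\<Sum>a\<in>D. g a)"
    using sum_mono[of D "\<lambda>_. 2 * B / card C" g] by (auto simp: D_def)
  also have "\<dots> \<le> (\<Sum>a\<in>C. g a)" using C g0 by (intro sum_mono2) (auto simp: D_def)
  also have "\<dots> \<le> B" by (rule B)
  finally have h: "card D * (2 * B / card C) \<le> B" .
  have "2 * card D \<le> card C"
  proof (cases "B = 0")
    case True
    have "g a \<le> 2 * B / card C" if a: "a \<in> C" for a
    proof -
      have "g a \<le> (\<Sum>a\<in>C. g a)" using member_le_sum[of a C g] a g0 C by auto
      then show ?thesis using B True by simp
    qed
    then have "D = {}" by (auto simp: D_def)
    then show ?thesis by simp
  next
    case False
    then have "B > 0" using B0 by simp
    then have "card D * 2 \<le> real (card C)" using h cC by (simp add: field_simps)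
    then show ?thesis by linarith
  qed
  moreover have "card K + card D = card C"
    unfolding K_def D_def using C by (subst card_Un_disjoint[symmetric]) (auto intro: arg_cong[where f=card])
  ultimately show ?thesis unfolding K_def by linarith
qed



definition acc :: "nat \<Rightarrow> real \<Rightarrow> bool list \<Rightarrow> bool" where
  "acc n \<delta> y \<longleftrightarrow> real n \<le> real (length y) + \<delta> * real n"

definition ww :: "nat \<Rightarrow> real \<Rightarrow> nat \<Rightarrow> real \<Rightarrow> bool list \<Rightarrow> bool list \<Rightarrow> real" where
  "ww \<tau> d n \<delta> a b = measure_pmf.prob (bdc_thr \<tau> d a) {y. acc n \<delta> y \<and> subseq y b}"

lemma finite_thr: "d \<in> {0..1} \<Longrightarrow> finite (set_pmf (thr_runs \<tau> d rs))"
proof (induction rs)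
  case Nil then show ?case by simp
next
  case (Cons r rs)
  obtain b l where r: "r = (b,l)" by force
  have "finite (set_pmf (if l < \<tau> then return_pmf l else binomial_pmf l (1 - d)))"
    using Cons.prems by (auto intro!: finite_set_pmf_binomial_pmf)
  then show ?case using Cons by (simp add: r)
qed

lemma finite_bdc: "d \<in> {0..1} \<Longrightarrow> finite (set_pmf (bdc_thr \<tau> d x))"
  by (simp add: bdc_thr_def finite_thr)

lemma card_super_bound:
  assumes "0 < \<delta>" "\<delta> \<le> 1/2" "acc n \<delta> y"
  shows "real (card {b \<in> words n. subseq y b}) \<le> 2 powr (n * bin_entropy \<delta>)"
proof -
  have c: "card {b \<in> words n. subseq y b} = gcnt n (length y)" by (rule card_super)
  show ?thesis
  proof (cases "length y \<le> n")
    case True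
    have "real (n - length y) \<le> \<delta> * n" using assms(3) True by (simp add: acc_def of_nat_diff)
    then show ?thesis using c True gcnt_closed[of n "length y"] sum_choose_entropy[OF assms(1,2)] by simp
  next
    case False
    then have "card {b \<in> words n. subseq y b} = 0" using c gcnt_closed[of n "length y"] by simp
    then show ?thesis by (metis of_nat_0 powr_ge_zero)
  qed
qed

lemma row_sum:
  assumes d: "d \<in> {0..1}" and "0 < \<delta>" "\<delta> \<le> 1/2"
  shows "(\<Sum>b\<in>words n. ww \<tau> d n \<delta> a b) \<le> 2 powr (n * bin_entropy \<delta>)"
proof -
  define P where "P = bdc_thr \<tau> d a"
  define Y where "Y = set_pmf P"
  define Sb where "Sb = 2 powr (n * bin_entropy \<delta>)"
  have Y: "finite Y" using finite_bdc[OF d] by (simp add: Y_def P_def)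
  have w: "ww \<tau> d n \<delta> a b = (\<Sum>y\<in>Y. pmf P y * (if acc n \<delta> y \<and> subseq y b then 1 else 0))" for b
  proof -
    have "ww \<tau> d n \<delta> a b = measure_pmf.prob P ({y. acc n \<delta> y \<and> subseq y b} \<inter> Y)"
      by (simp add: ww_def P_def Y_def measure_Int_set_pmf)
    also have "\<dots> = sum (pmf P) ({y. acc n \<delta> y \<and> subseq y b} \<inter> Y)"
      using Y by (simp add: measure_measure_pmf_finite)
    also have "\<dots> = (\<Sum>y\<in>Y. pmf P y * (if acc n \<delta> y \<and> subseq y b then 1 else 0))"
      using Y by (simp add: sum.inter_restrict Int_commute if_distrib cong: if_cong)
    finally show ?thesis .
  qed
  have "(\<Sum>b\<in>words n. ww \<tau> d n \<delta> a b) = (\<Sum>y\<in>Y. pmf P y * (\<Sum>b\<in>words n. (if acc n \<delta> y \<and> subseq y b then 1 else 0)))"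
    unfolding w by (subst sum.swap) (simp add: sum_distrib_left)
  also have "\<dots> \<le> (\<Sum>y\<in>Y. pmf P y * Sb)"
  proof (intro sum_mono mult_left_mono)
    fix y assume "y \<in> Y"
    show "(\<Sum>b\<in>words n. (if acc n \<delta> y \<and> subseq y b then 1 else 0)) \<le> Sb"
    proof (cases "acc n \<delta> y")
      case True
      have "(\<Sum>b\<in>words n. (if acc n \<delta> y \<and> subseq y b then 1 else 0::real)) = real (card {b \<in> words n. subseq y b})"
        using True by (simp add: sum.If_cases Int_def conj_commute)
      then show ?thesis using card_super_bound[OF assms(2,3) True] by (simp add: Sb_def)
    next
      case False
      then show ?thesis by (simp add: Sb_def)
    qed
  qed simp
  also have "\<dots> = Sb" using sum_pmf_eq_1[of Y P] Y by (simp add: Y_def sum_distrib_right[symmetric])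
  finally show ?thesis by (simp add: Sb_def)
qed

lemma ww_nonneg: "0 \<le> ww \<tau> d n \<delta> a b" by (simp add: ww_def)

lemma err_len:
  fixes lam \<gamma> \<delta> d :: real
  assumes d: "d \<in> {0..1}" and g: "\<gamma> > 0" and a: "a \<in> words n" and L: "Lfun \<tau> a \<le> lam * n"
    and le: "d * lam + \<gamma> \<le> \<delta>"
  shows "measure_pmf.prob (bdc_thr \<tau> d a) {y. \<not> acc n \<delta> y} \<le> exp (-2 * \<gamma>^2 * n)"
proof -
  have n: "sum_list (map snd (runs a)) = n" using sum_runs[of a] a by (simp add: words_def)
  have "d * Lr \<tau> (runs a) \<le> d * (lam * n)" using L d by (intro mult_left_mono) (auto simp: Lfun_def)
  moreover have "d * (lam * n) + \<gamma> * n \<le> \<delta> * n" using le by (metis distrib_right mult.assoc mult_right_mono of_nat_0_le_iff)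
  ultimately have "d * Lr \<tau> (runs a) + \<gamma> * n \<le> \<delta> * n" by linarith
  from tail_thr[OF d g n this] show ?thesis
    by (simp add: bdc_thr_def acc_def not_le)
qed

lemma decode_bound:
  fixes \<delta> d :: real and n M :: nat and enc :: "nat \<Rightarrow> bool list"
  assumes d: "d \<in> {0..1}" and fin: "finite C" and bij: "bij_betw enc {..<M} C" and i: "i < M"
  defines "dec \<equiv> (\<lambda>y. if acc n \<delta> y \<and> (\<exists>j<M. subseq y (enc j)) then (LEAST j. j < M \<and> subseq y (enc j)) else M)"
  shows "dec_error (bdc_thr \<tau> d) enc dec i \<le>
     measure_pmf.prob (bdc_thr \<tau> d (enc i)) {y. \<not> acc n \<delta> y} + (\<Sum>b\<in>C - {enc i}. ww \<tau> d n \<delta> (enc i) b)"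
proof -
  define P where "P = bdc_thr \<tau> d (enc i)"
  define U where "U = (\<Union>j\<in>{..<M} - {i}. {y. acc n \<delta> y \<and> subseq y (enc j)})"
  have sub: "{y. dec y \<noteq> i} \<inter> set_pmf P \<subseteq> {y. \<not> acc n \<delta> y} \<union> U"
  proof
    fix y assume y: "y \<in> {y. dec y \<noteq> i} \<inter> set_pmf P"
    have si: "subseq y (enc i)" using y subseq_bdc[OF d] by (auto simp: P_def)
    show "y \<in> {y. \<not> acc n \<delta> y} \<union> U"
    proof (rule ccontr)
      assume "\<not> ?thesis"
      then have ac: "acc n \<delta> y" and nu: "\<forall>j<M. j \<noteq> i \<longrightarrow> \<not> subseq y (enc j)" by (auto simp: U_def)
      have "(LEAST j. j < M \<and> subseq y (enc j)) = i"
        by (rule Least_equality) (use i si nu in auto)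
      then have "dec y = i" using ac i si by (auto simp: dec_def)
      then show False using y by simp
    qed
  qed
  have "dec_error (bdc_thr \<tau> d) enc dec i = measure_pmf.prob P ({y. dec y \<noteq> i} \<inter> set_pmf P)"
    by (simp add: dec_error_def P_def measure_Int_set_pmf)
  also have "\<dots> \<le> measure_pmf.prob P ({y. \<not> acc n \<delta> y} \<union> U)"
    using sub by (intro measure_pmf.finite_measure_mono) auto
  also have "\<dots> \<le> measure_pmf.prob P {y. \<not> acc n \<delta> y} + measure_pmf.prob P U"
    by (rule measure_Un_le) auto
  also have "measure_pmf.prob P U \<le> (\<Sum>j\<in>{..<M} - {i}. measure_pmf.prob P {y. acc n \<delta> y \<and> subseq y (enc j)})"
    unfolding U_def by (rule measure_pmf.finite_measure_subadditive_finite) auto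
  also have "\<dots> = (\<Sum>j\<in>{..<M} - {i}. ww \<tau> d n \<delta> (enc i) (enc j))"
    by (simp add: ww_def P_def)
  also have "\<dots> = (\<Sum>b\<in>C - {enc i}. ww \<tau> d n \<delta> (enc i) b)"
  proof -
    have inj: "inj_on enc ({..<M} - {i})" using bij by (meson Diff_subset bij_betw_def inj_on_subset)
    have img: "enc ` ({..<M} - {i}) = C - {enc i}"
      using bij i unfolding bij_betw_def inj_on_def by auto
    show ?thesis using sum.reindex[OF inj, of "ww \<tau> d n \<delta> (enc i)"] img by simp
  qed
  finally show ?thesis by (simp add: P_def)
qed



lemma code_exists:
  fixes d \<delta> \<gamma> lam :: real and n K :: nat
  assumes d: "d \<in> {0..1}" and d0: "0 < \<delta>" and d1: "\<delta> \<le> 1/2" and g: "\<gamma> > 0"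
    and le: "d * lam + \<gamma> \<le> \<delta>" and K: "K > 0"
    and T: "T = {x\<in>words n. Lfun \<tau> x \<le> lam * n}" and KT: "8 * K \<le> card T"
  shows "\<exists>M enc dec. K \<le> M \<and> (\<forall>i<M. length (enc i) = n) \<and>
     (\<forall>i<M. dec_error (bdc_thr \<tau> d) enc dec i \<le> exp (-2 * \<gamma>^2 * n) + 64 * K * 2 powr (n * bin_entropy \<delta>) / card T)"
proof -
  define Sb where "Sb = 2 powr (n * bin_entropy \<delta>)"
  define w where "w = ww \<tau> d n \<delta>"
  have Sb0: "Sb > 0" by (simp add: Sb_def)
  have Tfin: "finite T" using T by simp
  have Tw: "T \<subseteq> words n" using T by auto
  have Tne: "T \<noteq> {}" using KT K by auto
  have cT: "real (card T) > 0" using Tne Tfin by (simp add: card_gt_0_iff)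
  have w0: "\<And>a b. 0 \<le> w a b" by (simp add: w_def ww_nonneg)
  have rowT: "(\<Sum>b\<in>S. w a b) \<le> Sb" if "S \<subseteq> words n" for S a
  proof -
    have "(\<Sum>b\<in>S. w a b) \<le> (\<Sum>b\<in>words n. w a b)" using that w0 by (intro sum_mono2) auto
    also have "\<dots> \<le> Sb" unfolding w_def Sb_def by (rule row_sum[OF d d0 d1])
    finally show ?thesis .
  qed
  define col where "col b = (\<Sum>a\<in>T. w a b)" for b
  have "(\<Sum>b\<in>T. col b) = (\<Sum>a\<in>T. \<Sum>b\<in>T. w a b)" unfolding col_def by (rule sum.swap)
  also have "\<dots> \<le> (\<Sum>a\<in>T. Sb)" using rowT Tw by (intro sum_mono) auto
  finally have colsum: "(\<Sum>b\<in>T. col b) \<le> card T * Sb" by simp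
  define V where "V = {b\<in>T. col b \<le> 2 * (card T * Sb) / card T}"
  have cV: "card T \<le> 2 * card V"
    unfolding V_def using expurgate[OF Tfin Tne _ colsum] w0 by (simp add: col_def sum_nonneg)
  have Vdef: "V = {b\<in>T. col b \<le> 2 * Sb}" using cT by (simp add: V_def)
  have VT: "V \<subseteq> T" by (auto simp: V_def)
  have Vfin: "finite V" using VT Tfin finite_subset by auto
  have "2 * (2 * K) \<le> card V" using KT cV by linarith
  from greedy[of V w "2 * Sb", OF Vfin w0 _ _ this]
  obtain C where C: "C \<subseteq> V" "card C = 2 * K"
    and Csum: "(\<Sum>a\<in>C. \<Sum>b\<in>C - {a}. w a b) \<le> 4 * (real (2 * K))^2 * (2 * Sb) / card V"
  proof -
    have r: "(\<Sum>b\<in>V. w a b) \<le> 2 * Sb" if "a \<in> V" for a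
    proof -
      have "V \<subseteq> words n" using VT Tw by auto
      then have "(\<Sum>b\<in>V. w a b) \<le> Sb" by (rule rowT)
      then show ?thesis using Sb0 by linarith
    qed
    have c: "(\<Sum>a\<in>V. w a b) \<le> 2 * Sb" if "b \<in> V" for b
    proof -
      have "(\<Sum>a\<in>V. w a b) \<le> col b" unfolding col_def using VT Tfin w0 by (intro sum_mono2) auto
      then show ?thesis using that Vdef by auto
    qed
    assume H: "\<And>C. C \<subseteq> V \<Longrightarrow> card C = 2 * K \<Longrightarrow> (\<Sum>a\<in>C. \<Sum>b\<in>C - {a}. w a b) \<le> 4 * (real (2 * K))^2 * (2 * Sb) / card V \<Longrightarrow> thesis"
    show thesis using greedy[of V w "2 * Sb" "2 * K", OF Vfin w0 r c] H \<open>2 * (2 * K) \<le> card V\<close> by auto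
  qed
  have Cfin: "finite C" using C Vfin finite_subset by auto
  have Cne: "C \<noteq> {}" using C K by auto
  define B where "B = 4 * (real (2 * K))^2 * (2 * Sb) / card V"
  define C' where "C' = {a\<in>C. (\<Sum>b\<in>C - {a}. w a b) \<le> 2 * B / card C}"
  have "card C \<le> 2 * card C'"
    unfolding C'_def using expurgate[OF Cfin Cne _ Csum[folded B_def]] w0 by (simp add: sum_nonneg)
  then have KC': "K \<le> card C'" using C by simp
  have C'C: "C' \<subseteq> C" by (auto simp: C'_def)
  have C'fin: "finite C'" using C'C Cfin finite_subset by auto
  have cVpos: "real (card V) > 0" using \<open>2 * (2 * K) \<le> card V\<close> K by simp
  have thr: "2 * B / card C \<le> 64 * K * Sb / card T"
  proof -
    have "2 * B / card C = 32 * K * Sb / card V" using C K cVpos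
      by (simp add: B_def power2_eq_square field_simps)
    also have "\<dots> \<le> 32 * K * Sb / (card T / 2)"
      using cV cT Sb0 by (intro divide_left_mono) auto
    also have "\<dots> = 64 * K * Sb / card T" by simp
    finally show ?thesis .
  qed
  obtain enc where bij: "bij_betw enc {0..<card C'} C'" using ex_bij_betw_nat_finite[OF C'fin] by auto
  define M where "M = card C'"
  have bij': "bij_betw enc {..<M} C'" using bij by (simp add: M_def atLeast0LessThan)
  define dec where "dec \<equiv> (\<lambda>y. if acc n \<delta> y \<and> (\<exists>j<M. subseq y (enc j)) then (LEAST j. j < M \<and> subseq y (enc j)) else M)"
  have encC: "enc i \<in> C'" if "i < M" for i using bij' that bij_betw_apply by fastforce
  have encT: "enc i \<in> T" if "i < M" for i using encC[OF that] C'C C VT by auto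
  show ?thesis
  proof (intro exI conjI allI impI)
    show "K \<le> M" using KC' by (simp add: M_def)
  next
    fix i assume i: "i < M"
    show "length (enc i) = n" using encT[OF i] T by (auto simp: words_def)
  next
    fix i assume i: "i < M"
    have a: "enc i \<in> words n" "Lfun \<tau> (enc i) \<le> lam * n" using encT[OF i] T by auto
    have "dec_error (bdc_thr \<tau> d) enc dec i \<le>
       measure_pmf.prob (bdc_thr \<tau> d (enc i)) {y. \<not> acc n \<delta> y} + (\<Sum>b\<in>C' - {enc i}. w (enc i) b)"
      unfolding dec_def w_def by (rule decode_bound[OF d C'fin bij' i])
    also have "\<dots> \<le> exp (-2 * \<gamma>^2 * n) + 64 * K * Sb / card T"
    proof (rule add_mono)
      show "measure_pmf.prob (bdc_thr \<tau> d (enc i)) {y. \<not> acc n \<delta> y} \<le> exp (-2 * \<gamma>^2 * n)"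
        by (rule err_len[OF d g a le])
      have "(\<Sum>b\<in>C' - {enc i}. w (enc i) b) \<le> (\<Sum>b\<in>C - {enc i}. w (enc i) b)"
        using C'C Cfin w0 by (intro sum_mono2) auto
      also have "\<dots> \<le> 2 * B / card C" using encC[OF i] by (auto simp: C'_def)
      finally show "(\<Sum>b\<in>C' - {enc i}. w (enc i) b) \<le> 64 * K * Sb / card T" using thr by linarith
    qed
    finally show "dec_error (bdc_thr \<tau> d) enc dec i \<le> exp (-2 * \<gamma>^2 * n) + 64 * K * 2 powr (n * bin_entropy \<delta>) / card T"
      by (simp add: Sb_def)
  qed
qed



lemma achievable_intro:
  fixes W :: "bool list \<Rightarrow> bool list pmf" and \<beta> :: "nat \<Rightarrow> real"
  assumes lim: "\<beta> \<longlonglongrightarrow> 0"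
    and ev: "eventually (\<lambda>n. \<exists>M enc dec. 2 powr (R * real n) \<le> real M \<and> (\<forall>i<M. length (enc i) = n)
               \<and> (\<forall>i<M. dec_error W enc dec i \<le> \<beta> n)) sequentially"
  shows "achievable W R"
proof -
  define P where "P n = (\<exists>M enc dec. 2 powr (R * real n) \<le> real M \<and> (\<forall>i<M. length (enc i) = n)
               \<and> (\<forall>i<M. dec_error W enc dec i \<le> \<beta> n))" for n
  define Q where "Q n t = ((\<forall>i<fst t. length (fst (snd t) i) = n) \<and>
      (\<forall>i<fst t. dec_error W (fst (snd t)) (fst (snd (snd t))) i \<le> snd (snd (snd t))) \<and>
      (P n \<longrightarrow> 2 powr (R * real n) \<le> real (fst t) \<and> snd (snd (snd t)) = \<beta> n))"
    for n and t :: "nat \<times> (nat \<Rightarrow> bool list) \<times> (bool list \<Rightarrow> nat) \<times> real"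
  have "\<exists>t. Q n t" for n
  proof (cases "P n")
    case True
    then obtain M enc dec where "2 powr (R * real n) \<le> real M" "\<forall>i<M. length (enc i) = n"
      "\<forall>i<M. dec_error W enc dec i \<le> \<beta> n" unfolding P_def by blast
    then have "Q n (M, enc, dec, \<beta> n)" using True by (simp add: Q_def)
    then show ?thesis by blast
  next
    case False
    have "Q n (0, (\<lambda>_. []), (\<lambda>_. 0), 0)" using False by (simp add: Q_def)
    then show ?thesis by blast
  qed
  then obtain f where f: "\<And>n. Q n (f n)" by metis
  define M where "M n = fst (f n)" for n
  define enc where "enc n = fst (snd (f n))" for n
  define dec where "dec n = fst (snd (snd (f n)))" for n
  define \<epsilon> where "\<epsilon> n = snd (snd (snd (f n)))" for n
  have evP: "eventually P sequentially" using ev unfolding P_def .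
  have "eventually (\<lambda>n. \<beta> n = \<epsilon> n) sequentially"
    using evP by eventually_elim (use f in \<open>auto simp: Q_def \<epsilon>_def\<close>)
  then have "\<epsilon> \<longlonglongrightarrow> 0" by (rule Lim_transform_eventually[OF lim])
  moreover have "eventually (\<lambda>n. 2 powr (R * real n) \<le> real (M n)) sequentially"
    using evP by eventually_elim (use f in \<open>auto simp: Q_def M_def\<close>)
  moreover have "\<forall>n i. i < M n \<longrightarrow> length (enc n i) = n" using f by (auto simp: Q_def M_def enc_def)
  moreover have "\<forall>n i. i < M n \<longrightarrow> dec_error W (enc n) (dec n) i \<le> \<epsilon> n"
    using f by (auto simp: Q_def M_def enc_def dec_def \<epsilon>_def)
  ultimately show ?thesis unfolding achievable_def by blast
qed

lemma achievable_nonpos: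
  assumes "R \<le> 0"
  shows "achievable W R"
proof (rule achievable_intro[where \<beta> = "\<lambda>_. 0"])
  show "(\<lambda>_. 0::real) \<longlonglongrightarrow> 0" by simp
  show "eventually (\<lambda>n. \<exists>M enc dec. 2 powr (R * real n) \<le> real M \<and> (\<forall>i<M. length (enc i) = n)
               \<and> (\<forall>i<M. dec_error W enc dec i \<le> 0)) sequentially"
  proof (intro always_eventually allI exI[of _ 1] exI[of _ "\<lambda>_. replicate _ False"] exI[of _ "\<lambda>_. 0"] conjI)
    fix n :: nat
    have "R * real n \<le> 0" using assms by (simp add: mult_nonpos_nonneg)
    then have "2 powr (R * real n) \<le> 2 powr 0" by (intro powr_mono) auto
    then show "2 powr (R * real n) \<le> real (1::nat)" by simp
  qed (auto simp: dec_error_def)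
qed

lemma powr_lim0:
  fixes a :: real assumes "a < 0"
  shows "(\<lambda>n. 2 powr (a * real n)) \<longlonglongrightarrow> 0"
proof -
  have "(\<lambda>n. 2 powr (a * real n)) = (\<lambda>n. (2 powr a) ^ n)"
    by (simp add: powr_powr[symmetric] powr_realpow)
  moreover have "(\<lambda>n. (2 powr a) ^ n) \<longlonglongrightarrow> 0"
    using assms by (intro LIMSEQ_power_zero) (auto simp: powr_less_one)
  ultimately show ?thesis by simp
qed

lemma achievable_rate:
  fixes d \<delta> R :: real
  assumes d: "d \<in> {0..1}" and d0: "0 < \<delta>" and d1: "\<delta> \<le> 1/2" and dq: "d * qq \<tau> < \<delta>"
    and R0: "0 \<le> R" and R1: "R < 1 - bin_entropy \<delta>"
  shows "achievable (bdc_thr \<tau> d) R"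
proof -
  define q where "q = qq \<tau>"
  have q0: "q > 0" by (simp add: q_def qq_def)
  define \<gamma> where "\<gamma> = (\<delta> - d * q) / 2"
  have g: "\<gamma> > 0" using dq by (simp add: \<gamma>_def q_def)
  define lam where "lam = q + \<gamma>"
  have lam0: "lam > 0" using q0 g by (simp add: lam_def)
  have le: "d * lam + \<gamma> \<le> \<delta>"
  proof -
    have "d * \<gamma> \<le> \<gamma>" using d g by (simp add: mult_left_le_one_le)
    moreover have "d * lam + \<gamma> = d * q + d * \<gamma> + \<gamma>" by (simp add: lam_def distrib_left)
    moreover have "\<delta> = d * q + 2 * \<gamma>" by (simp add: \<gamma>_def field_simps)
    ultimately show ?thesis by linarith
  qed
  define cT where "cT = (1 - q / lam) / 2"
  have cT0: "cT > 0" using q0 g by (simp add: cT_def lam_def field_simps)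
  define hd where "hd = bin_entropy \<delta>"
  define T where "T n = {x\<in>words n. Lfun \<tau> x \<le> lam * n}" for n
  define K where "K n = nat \<lceil>2 powr (R * real n)\<rceil>" for n
  define \<beta> where "\<beta> n = exp (-2 * \<gamma>^2 * n) + (128 / cT) * 2 powr ((R + hd - 1) * real n)" for n
  have hd0: "hd \<ge> 0"
  proof -
    have l1: "log 2 \<delta> \<le> 0" using d0 d1 by simp
    have l2: "log 2 (1 - \<delta>) \<le> 0" using d0 d1 by simp
    have "0 \<le> - \<delta> * log 2 \<delta>" using l1 d0 by (simp add: mult_nonneg_nonpos)
    moreover have "0 \<le> (1 - \<delta>) * (- log 2 (1 - \<delta>))" using l2 d1 by (intro mult_nonneg_nonneg) auto
    then have "0 \<le> - (1 - \<delta>) * log 2 (1 - \<delta>)" by (simp only: mult_minus_right mult_minus_left)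
    moreover have "hd = (- \<delta> * log 2 \<delta>) + (- (1 - \<delta>) * log 2 (1 - \<delta>))"
      by (simp add: hd_def bin_entropy_def algebra_simps)
    ultimately show ?thesis by linarith
  qed
  show ?thesis
  proof (rule achievable_intro[where \<beta> = \<beta>])
    have "(\<lambda>n. exp (-2 * \<gamma>^2 * real n)) \<longlonglongrightarrow> 0"
    proof -
      have "(\<lambda>n. exp (-2 * \<gamma>^2 * real n)) = (\<lambda>n. (exp (-2 * \<gamma>^2)) ^ n)"
        by (simp add: exp_of_nat_mult[symmetric] mult.commute)
      moreover have "(\<lambda>n. (exp (-2 * \<gamma>^2)) ^ n) \<longlonglongrightarrow> 0"
        using g by (intro LIMSEQ_power_zero) auto
      ultimately show ?thesis by simp
    qed
    moreover have "(\<lambda>n. (128 / cT) * 2 powr ((R + hd - 1) * real n)) \<longlonglongrightarrow> 0"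
      using powr_lim0[of "R + hd - 1"] R1 by (intro tendsto_mult_right_zero) (simp add: hd_def)
    ultimately show "\<beta> \<longlonglongrightarrow> 0" unfolding \<beta>_def using tendsto_add_zero by blast
  next
    have ev1: "eventually (\<lambda>n. q / (lam * real n) \<le> cT) sequentially"
    proof -
      have "(\<lambda>n. (q / lam) / real n) \<longlonglongrightarrow> 0" by (rule lim_const_over_n)
      then have "(\<lambda>n. q / (lam * real n)) \<longlonglongrightarrow> 0" by (simp add: divide_divide_eq_left)
      from order_tendstoD(2)[OF this cT0] show ?thesis by (rule eventually_mono) simp
    qed
    have ev2: "eventually (\<lambda>n. 16 * 2 powr ((R - 1) * real n) \<le> cT) sequentially"
    proof -
      have "(\<lambda>n. 16 * 2 powr ((R - 1) * real n)) \<longlonglongrightarrow> 0"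
        using powr_lim0[of "R - 1"] R1 hd0 by (intro tendsto_mult_right_zero) (simp add: hd_def)
      from order_tendstoD(2)[OF this cT0] show ?thesis by (rule eventually_mono) simp
    qed
    show "eventually (\<lambda>n. \<exists>M enc dec. 2 powr (R * real n) \<le> real M \<and> (\<forall>i<M. length (enc i) = n)
               \<and> (\<forall>i<M. dec_error (bdc_thr \<tau> d) enc dec i \<le> \<beta> n)) sequentially"
      using ev1 ev2 eventually_gt_at_top[of 0]
    proof eventually_elim
      case (elim n)
      have n0: "n > 0" using elim by simp
      have P1: "2 powr (R * real n) \<ge> 1" using R0 by (simp add: ge_one_powr_ge_zero)
      have K1: "real (K n) \<ge> 2 powr (R * real n)" by (simp add: K_def)
      have K2: "real (K n) \<le> 2 * 2 powr (R * real n)"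
      proof -
        have "real (K n) \<le> 2 powr (R * real n) + 1" by (simp add: K_def)
        then show ?thesis using P1 by linarith
      qed
      have Kpos: "K n > 0" using K1 P1 by linarith
      have cardT: "real (card (T n)) \<ge> cT * 2 ^ n"
      proof -
        have "real (card (T n)) \<ge> 2 ^ n - (real n + 1) * q * 2 ^ n / (lam * n)"
          using card_T[OF lam0 n0, of \<tau>] by (simp add: T_def q_def)
        moreover have "(real n + 1) * q * 2 ^ n / (lam * n) = (q / lam + q / (lam * n)) * 2 ^ n"
          using n0 lam0 by (simp add: field_simps)
        moreover have "q / lam + q / (lam * n) \<le> 1 - cT" 
        proof -
          have aux: "\<And>a b::real. b \<le> (1-a)/2 \<Longrightarrow> a + b \<le> 1 - (1-a)/2" by (simp add: field_simps)
          show ?thesis using aux[OF elim(1)[unfolded cT_def]] unfolding cT_def .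
        qed
        ultimately have "real (card (T n)) \<ge> 2 ^ n - (1 - cT) * 2 ^ n"
          by (smt (verit) mult_right_mono zero_le_power)
        then show ?thesis by (simp add: algebra_simps)
      qed
      have KT: "8 * K n \<le> card (T n)"
      proof -
        have "real (8 * K n) \<le> 16 * 2 powr (R * real n)" using K2 by simp
        also have "\<dots> = 16 * 2 powr ((R - 1) * real n) * 2 ^ n"
          by (simp add: left_diff_distrib powr_diff powr_realpow)
        also have "\<dots> \<le> cT * 2 ^ n" using elim(2) by (intro mult_right_mono) auto
        also have "\<dots> \<le> real (card (T n))" by (rule cardT)
        finally show ?thesis by linarith
      qed
      obtain M enc dec where M: "K n \<le> M" and len: "\<forall>i<M. length (enc i) = n"
        and err: "\<forall>i<M. dec_error (bdc_thr \<tau> d) enc dec i \<le> exp (-2 * \<gamma>^2 * n) + 64 * K n * 2 powr (n * hd) / card (T n)"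
        using code_exists[OF d d0 d1 g le Kpos T_def KT] unfolding hd_def by blast
      have bnd: "64 * K n * 2 powr (n * hd) / card (T n) \<le> (128 / cT) * 2 powr ((R + hd - 1) * real n)"
      proof -
        have cTn: "cT * 2 ^ n > 0" using cT0 by simp
        have "64 * K n * 2 powr (n * hd) / card (T n) \<le> 64 * (2 * 2 powr (R * real n)) * 2 powr (n * hd) / (cT * 2 ^ n)"
          using K2 cardT cTn by (intro frac_le mult_right_mono mult_left_mono) auto
        also have "\<dots> = (128 / cT) * 2 powr ((R + hd - 1) * real n)"
          using cT0 by (simp add: powr_add powr_diff powr_realpow algebra_simps)
        finally show ?thesis .
      qed
      show ?case
      proof (intro exI conjI)
        show "2 powr (R * real n) \<le> real M" using K1 M by linarith
        show "\<forall>i<M. length (enc i) = n" by (rule len)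
        show "\<forall>i<M. dec_error (bdc_thr \<tau> d) enc dec i \<le> \<beta> n"
          using err bnd by (auto simp: \<beta>_def intro: order_trans)
      qed
    qed
  qed
qed



lemma h_half: "bin_entropy (1/2) = 1"
  by (simp add: bin_entropy_def log_divide)

lemma h_cont_right:
  fixes p :: real assumes "0 \<le> p" "p < 1"
  shows "((\<lambda>x. bin_entropy x) \<longlongrightarrow> bin_entropy p) (at_right p)"
proof (cases "p = 0")
  case True
  have "((\<lambda>x. bin_entropy x) \<longlongrightarrow> 0) (at_right 0)"
    unfolding bin_entropy_def log_def by real_asymp
  moreover have "bin_entropy 0 = 0" by (simp add: bin_entropy_def)
  ultimately show ?thesis using True by simp
next
  case False
  then have "p > 0" using assms by simp
  then have "((\<lambda>x. bin_entropy x) \<longlongrightarrow> bin_entropy p) (at p)"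
    using assms unfolding bin_entropy_def by (intro tendsto_intros) auto
  then show ?thesis by (rule tendsto_mono[OF at_le, rotated]) auto
qed

theorem theorem7p2:
  fixes d :: real and \<tau> :: nat
  assumes "0 \<le> d" and "d \<le> 1"
    and "d * (real \<tau> + 1) / 2 ^ \<tau> \<le> 1 / 2"
  shows "capacity (bdc_thr \<tau> d) \<ge> ereal (1 - bin_entropy (d * (real \<tau> + 1) / 2 ^ \<tau>))"
proof -
  define p where "p = d * (real \<tau> + 1) / 2 ^ \<tau>"
  define W where "W = bdc_thr \<tau> d"
  have d01: "d \<in> {0..1}" using assms by auto
  have pq: "p = d * qq \<tau>" by (simp add: p_def qq_def)
  have p0: "0 \<le> p" using assms by (simp add: p_def)
  have p1: "p \<le> 1/2" using assms by (simp add: p_def)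
  have key: "ereal r \<le> capacity W" if r: "r < 1 - bin_entropy p" for r
  proof -
    have "\<exists>R. achievable W R \<and> r \<le> R"
    proof (cases "r \<le> 0")
      case True
      then show ?thesis using achievable_nonpos[OF True] by blast
    next
      case False
      have plt: "p < 1/2"
      proof (rule ccontr)
        assume "\<not> p < 1/2"
        then have "p = 1/2" using p1 by simp
        then have "bin_entropy p = 1" using h_half by (simp only:)
        then show False using r False by simp
      qed
      have "((\<lambda>x. bin_entropy x) \<longlongrightarrow> bin_entropy p) (at_right p)"
        using p0 plt by (intro h_cont_right) auto
      then have e1: "eventually (\<lambda>x. bin_entropy x < 1 - r) (at_right p)"
        using r by (intro order_tendstoD(2)) auto
      have e2: "eventually (\<lambda>x. x < 1/2) (at_right p)"
        using plt unfolding eventually_at_right[OF plt] by blast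
      have e3: "eventually (\<lambda>x. p < x) (at_right p)" by (rule eventually_at_right_less)
      have "eventually (\<lambda>x. bin_entropy x < 1 - r \<and> x < 1/2 \<and> p < x) (at_right p)"
        using e1 e2 e3 by eventually_elim auto
      then have "frequently (\<lambda>x. bin_entropy x < 1 - r \<and> x < 1/2 \<and> p < x) (at_right p)"
        by (rule eventually_frequently[rotated]) simp
      then obtain \<delta> where \<delta>: "bin_entropy \<delta> < 1 - r" "\<delta> < 1/2" "p < \<delta>"
        using frequently_ex by blast
      have "achievable W r" unfolding W_def
        by (rule achievable_rate[OF d01, of \<delta>]) (use \<delta> p0 pq False in auto)
      then show ?thesis by blast
    qed
    then obtain R where R: "achievable W R" "r \<le> R" by blast
    have "ereal R \<le> capacity W" unfolding capacity_def using R by (intro Sup_upper) auto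
    then show ?thesis using R by (meson ereal_less_eq(3) order_trans)
  qed
  show ?thesis
  proof (rule ccontr)
    assume "\<not> ?thesis"
    then have "capacity W < ereal (1 - bin_entropy p)" by (simp add: W_def p_def not_le)
    then obtain z where z: "capacity W < ereal z" "ereal z < ereal (1 - bin_entropy p)"
      using ereal_dense2 by blast
    have "ereal z \<le> capacity W" using z by (intro key) simp
    then show False using z by simp
  qed
qed

end
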